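(* Let $n,k,b,t$ be positive integers with $k\le n$, let $V=\{1,\dots,n\}$, and let $Q_1,\dots,Q_t$ be arbitrary subsets of $V\times\{1,\dots,b\}$. For $1\le i\le t$ and $1\le\beta\le b$ put $Q_{i,\beta}=\{x\in V:(x,\beta)\in Q_i\}$. Let $\mathcal F_k^n$ denote the family of all $k$-element subsets of $V$. Then there exists a subfamily $\mathcal S\subseteq\mathcal F_k^n$ with $|\mathcal S|\ge |\mathcal F_k^n|/2^{bt}$ such that for any two sets $A,B\in\mathcal S$ and all $1\le i\le t$, $1\le\beta\le b$, the number $|A\cap Q_{i,\beta}|$ is odd if and only if $|B\cap Q_{i,\beta}|$ is odd.
   Context: Each $Q_i$ (a "query") is interpreted as the set of pairs (station $x$, channel $\beta$) such that station $x$ transmits on channel $\beta$ at time step $i$; a deterministic oblivious algorithm is represented by such a sequence $Q_1,\dots,Q_t$. *)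

theory Defs
  imports Complex_Main
begin

definition k_subsets :: "nat \<Rightarrow> nat \<Rightarrow> nat set set" where
  "k_subsets n k = {A. A \<subseteq> {1..n} \<and> card A = k}"

definition query_channel :: "(nat \<times> nat) set \<Rightarrow> nat \<Rightarrow> nat set" where
  "query_channel Qi \<beta> = {x. (x, \<beta>) \<in> Qi}"

end

theory Submission
  imports Defs
begin

lemma pigeon_fiber:
  fixes F :: "'a set" and T :: "'b set" and f :: "'a \<Rightarrow> 'b"
  assumes "finite F" "finite T" "f ` F \<subseteq> T" "T \<noteq> {}"
  shows "\<exists>s. card F \<le> card {A\<in>F. f A = s} * card T"
proof (rule ccontr)
  assume "\<not> ?thesis"
  hence lt: "\<And>s. card {A\<in>F. f A = s} * card T < card F" by (simp add: not_le)
  have eq: "F = (\<Union>s\<in>T. {A\<in>F. f A = s})" using assms(3) by auto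
  have "card F = (\<Sum>s\<in>T. card {A\<in>F. f A = s})"
    apply (subst eq)
    apply (rule card_UN_disjoint)
    using assms by auto
  hence "card F * card T = (\<Sum>s\<in>T. card {A\<in>F. f A = s} * card T)"
    by (simp add: sum_distrib_right)
  also have "\<dots> < (\<Sum>s\<in>T. card F)"
    by (rule sum_strict_mono) (use assms lt in auto)
  also have "\<dots> = card F * card T" by simp
  finally show False by simp
qed

theorem lemma1:
  fixes n k b t :: nat and Q :: "nat \<Rightarrow> (nat \<times> nat) set"
  assumes "0 < n" "0 < k" "0 < b" "0 < t" "k \<le> n"
    and "\<And>i. i \<in> {1..t} \<Longrightarrow> Q i \<subseteq> {1..n} \<times> {1..b}"
  shows "\<exists>S. S \<subseteq> k_subsets n k \<and>
           real (card S) \<ge> real (card (k_subsets n k)) / 2 ^ (b * t) \<and>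
           (\<forall>A\<in>S. \<forall>B\<in>S. \<forall>i\<in>{1..t}. \<forall>\<beta>\<in>{1..b}.
              odd (card (A \<inter> query_channel (Q i) \<beta>)) \<longleftrightarrow>
              odd (card (B \<inter> query_channel (Q i) \<beta>)))"
proof -
  define F where "F = k_subsets n k"
  define I where "I = {1..t} \<times> {1..b}"
  define sig where "sig A = {p \<in> I. odd (card (A \<inter> query_channel (Q (fst p)) (snd p)))}" for A
  define T where "T = Pow I"
  have finF: "finite F" unfolding F_def k_subsets_def
    by (rule finite_subset[of _ "Pow {1..n}"]) auto
  have finT: "finite T" unfolding T_def I_def by simp
  have cardT: "card T = 2 ^ (b * t)" unfolding T_def I_def
    by (simp add: card_Pow card_cartesian_product mult.commute)
  have sub: "sig ` F \<subseteq> T" unfolding T_def sig_def by auto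
  obtain s where s: "card F \<le> card {A\<in>F. sig A = s} * card T"
    using pigeon_fiber[OF finF finT sub] unfolding T_def by auto
  define S where "S = {A\<in>F. sig A = s}"
  have "card F \<le> card S * 2 ^ (b * t)" using s unfolding S_def cardT .
  hence "real (card F) \<le> real (card S * 2 ^ (b * t))" by (simp only: of_nat_le_iff)
  hence "real (card F) \<le> real (card S) * 2 ^ (b * t)" by simp
  hence c: "real (card F) / 2 ^ (b * t) \<le> real (card S)"
    by (simp add: divide_le_eq)
  have "\<forall>A\<in>S. \<forall>B\<in>S. \<forall>i\<in>{1..t}. \<forall>\<beta>\<in>{1..b}.
              odd (card (A \<inter> query_channel (Q i) \<beta>)) \<longleftrightarrow>
              odd (card (B \<inter> query_channel (Q i) \<beta>))"
  proof (intro ballI)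
    fix A B i \<beta> assume AB: "A \<in> S" "B \<in> S" and i: "i \<in> {1..t}" and be: "\<beta> \<in> {1..b}"
    hence "sig A = sig B" unfolding S_def by auto
    moreover have "(i,\<beta>) \<in> I" using i be unfolding I_def by auto
    ultimately show "odd (card (A \<inter> query_channel (Q i) \<beta>)) \<longleftrightarrow>
              odd (card (B \<inter> query_channel (Q i) \<beta>))"
      unfolding sig_def by (simp add: set_eq_iff) metis
  qed
  moreover have "S \<subseteq> k_subsets n k" unfolding S_def F_def by auto
  ultimately show ?thesis using c unfolding F_def by blast
qed

end
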